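(* Let $G$ be a subcubic planar graph of girth at least $9$ which cannot be decomposed into a linear forest and a matching, chosen with $|V(G)|+|E(G)|$ minimum among all such graphs. Then $G$ contains no two adjacent vertices of degree $2$.
   Context: A graph is subcubic if every vertex has degree at most $3$. The girth is the length of a shortest cycle ($\infty$ if acyclic). A linear forest is a graph each of whose components is a path. A decomposition of $G$ into a linear forest and a matching is a partition of $E(G)$ into the edge set of a linear forest and the edge set of a matching. *)

theory Defs
  imports "HOL-Analysis.Analysis"
begin

definition graph :: "'a set \<Rightarrow> 'a set set \<Rightarrow> bool" where
  "graph V E \<longleftrightarrow> finite V \<and> (\<forall>e\<in>E. \<exists>u v. e = {u, v} \<and> u \<noteq> v \<and> u \<in> V \<and> v \<in> V)"

definition degree :: "'a set set \<Rightarrow> 'a \<Rightarrow> nat" where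
  "degree E v = card {e \<in> E. v \<in> e}"

definition subcubic :: "'a set \<Rightarrow> 'a set set \<Rightarrow> bool" where
  "subcubic V E \<longleftrightarrow> (\<forall>v\<in>V. degree E v \<le> 3)"

definition is_cycle :: "'a set \<Rightarrow> 'a set set \<Rightarrow> 'a list \<Rightarrow> bool" where
  "is_cycle V E vs \<longleftrightarrow> length vs \<ge> 3 \<and> distinct vs \<and> set vs \<subseteq> V \<and>
     (\<forall>i < length vs. {vs ! i, vs ! ((i + 1) mod length vs)} \<in> E)"

definition girth_at_least :: "'a set \<Rightarrow> 'a set set \<Rightarrow> nat \<Rightarrow> bool" where
  "girth_at_least V E k \<longleftrightarrow> (\<forall>vs. is_cycle V E vs \<longrightarrow> length vs \<ge> k)"

text \<open>A linear forest: a forest (no cycles) of maximum degree at most 2, i.e. every component is a path.\<close>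
definition linear_forest :: "'a set \<Rightarrow> 'a set set \<Rightarrow> bool" where
  "linear_forest V F \<longleftrightarrow> (\<forall>vs. \<not> is_cycle V F vs) \<and> (\<forall>v\<in>V. degree F v \<le> 2)"

definition matching :: "'a set set \<Rightarrow> bool" where
  "matching M \<longleftrightarrow> (\<forall>e\<in>M. \<forall>e'\<in>M. e \<noteq> e' \<longrightarrow> e \<inter> e' = {})"

definition lf_matching_decomposable :: "'a set \<Rightarrow> 'a set set \<Rightarrow> bool" where
  "lf_matching_decomposable V E \<longleftrightarrow>
     (\<exists>F M. F \<union> M = E \<and> F \<inter> M = {} \<and> linear_forest V F \<and> matching M)"

text \<open>Planarity: a drawing in the plane (complex numbers = R^2) with distinct points for vertices
  and arcs for edges, each arc joining its endpoints, meeting no other vertex, and two arcs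
  meeting only in common endpoints.\<close>
definition planar :: "'a set \<Rightarrow> 'a set set \<Rightarrow> bool" where
  "planar V E \<longleftrightarrow> (\<exists>(p :: 'a \<Rightarrow> complex) (\<gamma> :: 'a set \<Rightarrow> real \<Rightarrow> complex).
     inj_on p V \<and>
     (\<forall>e\<in>E. arc (\<gamma> e) \<and> {pathstart (\<gamma> e), pathfinish (\<gamma> e)} = p ` e \<and>
              path_image (\<gamma> e) \<inter> p ` V = p ` e) \<and>
     (\<forall>e\<in>E. \<forall>e'\<in>E. e \<noteq> e' \<longrightarrow> path_image (\<gamma> e) \<inter> path_image (\<gamma> e') \<subseteq> p ` (e \<inter> e')))"

definition bad_graph :: "'a set \<Rightarrow> 'a set set \<Rightarrow> bool" where
  "bad_graph V E \<longleftrightarrow> graph V E \<and> subcubic V E \<and> planar V E \<and> girth_at_least V E 9 \<and>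
     \<not> lf_matching_decomposable V E"

end

theory Submission imports Defs begin

lemma graph_Pow: "graph V E \<Longrightarrow> E \<subseteq> Pow V"
proof
  fix e assume g: "graph V E" and e: "e \<in> E"
  then obtain u v where "e = {u, v}" "u \<in> V" "v \<in> V" unfolding graph_def by blast
  then show "e \<in> Pow V" by simp
qed

lemma graph_finE: "graph V E \<Longrightarrow> finite E"
proof -
  assume g: "graph V E"
  have "finite (Pow V)" using g unfolding graph_def by simp
  then show "finite E" using graph_Pow[OF g] by (rule finite_subset[rotated])
qed

lemma degree_img:
  assumes "inj_on f V" "E \<subseteq> Pow V" "v \<in> V"
  shows "degree ((`) f ` E) (f v) = degree E v"
proof -
  have mem: "f v \<in> f ` e \<longleftrightarrow> v \<in> e" if "e \<in> E" for e
    by (rule inj_on_image_mem_iff[OF assms(1) assms(3)]) (use that assms(2) in auto)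
  have eq: "{e' \<in> (`) f ` E. f v \<in> e'} = (`) f ` {e \<in> E. v \<in> e}"
    using mem by auto
  have "inj_on ((`) f) {e \<in> E. v \<in> e}"
    by (rule inj_on_subset[OF inj_on_image_Pow[OF assms(1)]]) (use assms(2) in auto)
  then show ?thesis unfolding degree_def eq by (simp add: card_image)
qed

lemma cycle_fwd:
  assumes "inj_on f V" "is_cycle V F vs"
  shows "is_cycle (f ` V) ((`) f ` F) (map f vs)"
proof -
  have sv: "set vs \<subseteq> V" and dv: "distinct vs" and l3: "3 \<le> length vs"
    using assms(2) by (simp_all add: is_cycle_def)
  have d: "distinct (map f vs)" using dv inj_on_subset[OF assms(1) sv] by (simp add: distinct_map)
  have "{map f vs ! i, map f vs ! ((i + 1) mod length (map f vs))} \<in> (`) f ` F"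
    if "i < length vs" for i
  proof -
    have k: "(i + 1) mod length vs < length vs" by (rule mod_less_divisor) (use that in auto)
    have "{vs ! i, vs ! ((i + 1) mod length vs)} \<in> F" using assms(2) that by (simp add: is_cycle_def)
    moreover have "{map f vs ! i, map f vs ! ((i + 1) mod length (map f vs))} = f ` {vs ! i, vs ! ((i + 1) mod length vs)}"
      using k that by simp
    ultimately show ?thesis by blast
  qed
  then have E: "\<forall>i < length (map f vs). {map f vs ! i, map f vs ! ((i + 1) mod length (map f vs))} \<in> (`) f ` F"
    by simp
  have S: "set (map f vs) \<subseteq> f ` V" using sv by auto
  show ?thesis unfolding is_cycle_def using l3 d S E by simp
qed

lemma cycle_bwd:
  assumes "inj_on f V" "E \<subseteq> Pow V" "is_cycle (f ` V) ((`) f ` E) vs"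
  shows "is_cycle V E (map (inv_into V f) vs) \<and> length (map (inv_into V f) vs) = length vs"
proof -
  let ?g = "inv_into V f"
  have s: "set vs \<subseteq> f ` V" using assms(3) by (simp add: is_cycle_def)
  have dv: "distinct vs" and l3: "3 \<le> length vs" using assms(3) by (simp_all add: is_cycle_def)
  have d: "distinct (map ?g vs)" using dv inj_on_inv_into[OF s] by (simp add: distinct_map)
  have sV: "set (map ?g vs) \<subseteq> V"
  proof
    fix x assume "x \<in> set (map ?g vs)"
    then obtain y where "y \<in> set vs" "x = ?g y" by auto
    then show "x \<in> V" using s by (metis inv_into_into subsetD)
  qed
  have ed: "{?g (vs ! i), ?g (vs ! ((i + 1) mod length vs))} \<in> E" if "i < length vs" for i
  proof -
    from assms(3) that obtain e where e: "e \<in> E" "{vs ! i, vs ! ((i + 1) mod length vs)} = f ` e"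
      unfolding is_cycle_def by blast
    have "e \<subseteq> V" using e assms(2) by auto
    then have "?g ` (f ` e) = e" using assms(1) by (simp add: inv_into_image_cancel)
    then have "?g ` {vs ! i, vs ! ((i + 1) mod length vs)} = e" using e by simp
    then show ?thesis using e by simp
  qed
  have ed2: "{map ?g vs ! i, map ?g vs ! ((i + 1) mod length (map ?g vs))} \<in> E" if "i < length vs" for i
  proof -
    have k: "(i + 1) mod length vs < length vs" by (rule mod_less_divisor) (use that in auto)
    show ?thesis using ed[OF that] k that by simp
  qed
  then have E: "\<forall>i < length (map ?g vs). {map ?g vs ! i, map ?g vs ! ((i + 1) mod length (map ?g vs))} \<in> E"
    by simp
  show ?thesis unfolding is_cycle_def using l3 d sV E by simp
qed

lemma cycle_mono: "E1 \<subseteq> E2 \<Longrightarrow> is_cycle V E1 vs \<Longrightarrow> is_cycle V E2 vs"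
  unfolding is_cycle_def by blast

lemma planar_img:
  assumes "inj_on f V" "E \<subseteq> Pow V" "planar V E"
  shows "planar (f ` V) ((`) f ` E)"
proof -
  obtain p :: "_ \<Rightarrow> complex" and \<gamma> :: "_ \<Rightarrow> real \<Rightarrow> complex" where P: "inj_on p V"
     "\<forall>e\<in>E. arc (\<gamma> e) \<and> {pathstart (\<gamma> e), pathfinish (\<gamma> e)} = p ` e \<and>
              path_image (\<gamma> e) \<inter> p ` V = p ` e"
     "\<forall>e\<in>E. \<forall>e'\<in>E. e \<noteq> e' \<longrightarrow> path_image (\<gamma> e) \<inter> path_image (\<gamma> e') \<subseteq> p ` (e \<inter> e')"
    using assms(3) unfolding planar_def by blast
  let ?g = "inv_into V f"
  let ?ge = "inv_into E ((`) f)"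
  have injh: "inj_on ((`) f) E" using inj_on_image_Pow[OF assms(1)] assms(2) by (rule inj_on_subset)
  have gV: "?g ` (f ` V) = V" using assms(1) by (simp add: inv_into_image_cancel)
  have ge: "?ge (f ` e) = e" if "e \<in> E" for e using injh that by simp
  have gi: "?g ` (f ` e) = e" if "e \<in> E" for e
    using that assms(1,2) by (intro inv_into_image_cancel) auto
  have A: "inj_on (p \<circ> ?g) (f ` V)"
    using P(1) gV by (metis comp_inj_on inj_on_inv_into subset_refl)
  have B: "\<forall>e'\<in>(`) f ` E. arc ((\<gamma> \<circ> ?ge) e') \<and> {pathstart ((\<gamma> \<circ> ?ge) e'), pathfinish ((\<gamma> \<circ> ?ge) e')} = (p \<circ> ?g) ` e' \<and>
              path_image ((\<gamma> \<circ> ?ge) e') \<inter> (p \<circ> ?g) ` (f ` V) = (p \<circ> ?g) ` e'"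
  proof
    fix e' assume "e' \<in> (`) f ` E"
    then obtain e where e: "e \<in> E" "e' = f ` e" by blast
    have 1: "(\<gamma> \<circ> ?ge) e' = \<gamma> e" using ge[OF e(1)] e(2) by simp
    have 2: "(p \<circ> ?g) ` e' = p ` e" using gi[OF e(1)] e(2) by (metis image_comp)
    have 3: "(p \<circ> ?g) ` (f ` V) = p ` V" using gV by (metis image_comp)
    show "arc ((\<gamma> \<circ> ?ge) e') \<and> {pathstart ((\<gamma> \<circ> ?ge) e'), pathfinish ((\<gamma> \<circ> ?ge) e')} = (p \<circ> ?g) ` e' \<and>
              path_image ((\<gamma> \<circ> ?ge) e') \<inter> (p \<circ> ?g) ` (f ` V) = (p \<circ> ?g) ` e'"
      unfolding 1 2 3 using P(2) e(1) by blast
  qed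
  have C: "\<forall>e\<in>(`) f ` E. \<forall>e'\<in>(`) f ` E. e \<noteq> e' \<longrightarrow> path_image ((\<gamma> \<circ> ?ge) e) \<inter> path_image ((\<gamma> \<circ> ?ge) e') \<subseteq> (p \<circ> ?g) ` (e \<inter> e')"
  proof (intro ballI impI)
    fix e1' e2' assume "e1' \<in> (`) f ` E" "e2' \<in> (`) f ` E" "e1' \<noteq> e2'"
    then obtain e1 e2 where e: "e1 \<in> E" "e2 \<in> E" "e1' = f ` e1" "e2' = f ` e2" "e1 \<noteq> e2" by auto
    have s12: "e1 \<subseteq> V" "e2 \<subseteq> V" using e(1,2) assms(2) by auto
    have "e1' \<inter> e2' = f ` (e1 \<inter> e2)" using e(3,4) s12 assms(1) by (simp add: inj_on_image_Int)
    moreover have "?g ` (f ` (e1 \<inter> e2)) = e1 \<inter> e2" using s12 assms(1) by (intro inv_into_image_cancel) auto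
    ultimately have 4: "(p \<circ> ?g) ` (e1' \<inter> e2') = p ` (e1 \<inter> e2)"
      by (metis image_comp)
    have 5: "(\<gamma> \<circ> ?ge) e1' = \<gamma> e1" "(\<gamma> \<circ> ?ge) e2' = \<gamma> e2" using ge e by auto
    show "path_image ((\<gamma> \<circ> ?ge) e1') \<inter> path_image ((\<gamma> \<circ> ?ge) e2') \<subseteq> (p \<circ> ?g) ` (e1' \<inter> e2')"
      unfolding 4 5 using P(3) e(1,2,5) by blast
  qed
  show ?thesis unfolding planar_def
    apply (rule exI[of _ "p \<circ> ?g"])
    apply (rule exI[of _ "\<gamma> \<circ> ?ge"])
    using A B C by blast
qed

lemma decomp_pull:
  assumes "inj_on f V" "E \<subseteq> Pow V" "finite E"
    and "lf_matching_decomposable (f ` V) ((`) f ` E)"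
  shows "lf_matching_decomposable V E"
proof -
  obtain F' M' where FM: "F' \<union> M' = (`) f ` E" "F' \<inter> M' = {}" "linear_forest (f ` V) F'" "matching M'"
    using assms(4) unfolding lf_matching_decomposable_def by blast
  have injh: "inj_on ((`) f) E" using inj_on_image_Pow[OF assms(1)] assms(2) by (rule inj_on_subset)
  define F where "F = {e \<in> E. f ` e \<in> F'}"
  define M where "M = {e \<in> E. f ` e \<in> M'}"
  have 1: "F \<union> M = E"
  proof
    show "F \<union> M \<subseteq> E" unfolding F_def M_def by auto
    show "E \<subseteq> F \<union> M"
    proof
      fix e assume "e \<in> E"
      then have "f ` e \<in> F' \<union> M'" using FM(1) by simp
      then show "e \<in> F \<union> M" using \<open>e \<in> E\<close> unfolding F_def M_def by auto
    qed
  qed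
  have 2: "F \<inter> M = {}" using FM(2) unfolding F_def M_def by auto
  have "F' \<subseteq> (`) f ` E" using FM(1) by auto
  moreover have "finite ((`) f ` E)" using assms(3) by simp
  ultimately have finF': "finite F'" by (rule finite_subset)
  have 3: "linear_forest V F"
    unfolding linear_forest_def
  proof (intro conjI allI ballI notI)
    fix vs assume "is_cycle V F vs"
    then have "is_cycle (f ` V) ((`) f ` F) (map f vs)" by (rule cycle_fwd[OF assms(1)])
    then have "is_cycle (f ` V) F' (map f vs)" by (rule cycle_mono[rotated]) (auto simp: F_def)
    then show False using FM(3) unfolding linear_forest_def by blast
  next
    fix v assume v: "v \<in> V"
    have FP: "F \<subseteq> Pow V" using assms(2) by (auto simp: F_def)
    have "degree F v = degree ((`) f ` F) (f v)"
      using degree_img[OF assms(1) FP v] by simp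
    also have "\<dots> \<le> degree F' (f v)" unfolding degree_def
      by (rule card_mono) (use finF' in \<open>auto simp: F_def\<close>)
    also have "\<dots> \<le> 2" using FM(3) v unfolding linear_forest_def by auto
    finally show "degree F v \<le> 2" .
  qed
  have 4: "matching M" unfolding matching_def
  proof (intro ballI impI)
    fix e e' assume "e \<in> M" "e' \<in> M" "e \<noteq> e'"
    then have ee: "e \<in> E" "e' \<in> E" "f ` e \<in> M'" "f ` e' \<in> M'"
      unfolding M_def by auto
    have "f ` e \<noteq> f ` e'"
    proof
      assume "f ` e = f ` e'"
      then have "e = e'" using inj_on_eq_iff[OF injh ee(1,2)] by simp
      then show False using \<open>e \<noteq> e'\<close> by simp
    qed
    then have "f ` e \<inter> f ` e' = {}" using FM(4) ee(3,4) unfolding matching_def by simp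
    then show "e \<inter> e' = {}" by blast
  qed
  show ?thesis unfolding lf_matching_decomposable_def
    by (rule exI[of _ F], rule exI[of _ M]) (use 1 2 3 4 in blast)
qed

lemma bad_transfer:
  assumes "bad_graph V E" "inj_on f V"
  shows "bad_graph (f ` V) ((`) f ` E)"
proof -
  have g: "graph V E" and sc: "subcubic V E" and pl: "planar V E" and gi: "girth_at_least V E 9"
    and nd: "\<not> lf_matching_decomposable V E"
    using assms(1) unfolding bad_graph_def by auto
  have P: "E \<subseteq> Pow V" using g by (rule graph_Pow)
  have fE: "finite E" using g by (rule graph_finE)
  have "graph (f ` V) ((`) f ` E)"
    unfolding graph_def
  proof (intro conjI ballI)
    show "finite (f ` V)" using g unfolding graph_def by simp
  next
    fix e' assume "e' \<in> (`) f ` E"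
    then obtain e where e: "e \<in> E" "e' = f ` e" by blast
    then obtain a b where ab: "e = {a, b}" "a \<noteq> b" "a \<in> V" "b \<in> V"
      using g unfolding graph_def by blast
    have "f a \<noteq> f b" using ab assms(2) by (meson inj_onD)
    then show "\<exists>u v. e' = {u, v} \<and> u \<noteq> v \<and> u \<in> f ` V \<and> v \<in> f ` V"
      using ab e by auto
  qed
  moreover have "subcubic (f ` V) ((`) f ` E)"
    using sc degree_img[OF assms(2) P] unfolding subcubic_def by auto
  moreover have "planar (f ` V) ((`) f ` E)" using assms(2) P pl by (rule planar_img)
  moreover have "girth_at_least (f ` V) ((`) f ` E) 9"
    unfolding girth_at_least_def
  proof (intro allI impI)
    fix vs assume "is_cycle (f ` V) ((`) f ` E) vs"
    from cycle_bwd[OF assms(2) P this] gi show "9 \<le> length vs"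
      unfolding girth_at_least_def by metis
  qed
  moreover have "\<not> lf_matching_decomposable (f ` V) ((`) f ` E)"
    using decomp_pull[OF assms(2) P fE] nd by blast
  ultimately show ?thesis unfolding bad_graph_def by blast
qed

lemma cycle_deg:
  assumes "finite F" "is_cycle V F vs" "w \<in> set vs"
  shows "2 \<le> degree F w"
proof -
  let ?n = "length vs"
  have n3: "?n \<ge> 3" and dis: "distinct vs"
    and ed: "\<And>i. i < ?n \<Longrightarrow> {vs ! i, vs ! ((i + 1) mod ?n)} \<in> F"
    using assms(2) unfolding is_cycle_def by auto
  obtain i where i: "i < ?n" "vs ! i = w" using assms(3) by (meson in_set_conv_nth)
  define k where "k = (if i + 1 < ?n then i + 1 else 0)"
  define j where "j = (if i = 0 then ?n - 1 else i - 1)"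
  have k0: "(i + 1) mod ?n = k \<and> k < ?n"
  proof (cases "i + 1 < ?n")
    case True then show ?thesis unfolding k_def by auto
  next
    case False then have "i + 1 = ?n" using i by linarith
    then show ?thesis unfolding k_def using n3 by auto
  qed
  then have k: "(i + 1) mod ?n = k" "k < ?n" by auto
  have j: "(j + 1) mod ?n = i" "j < ?n" using i n3 unfolding j_def by auto
  have kj: "k \<noteq> j" "k \<noteq> i" "j \<noteq> i" using i n3 unfolding k_def j_def by auto
  have e1: "{w, vs ! k} \<in> F" using ed[OF i(1)] i k by simp
  have e2: "{vs ! j, w} \<in> F" using ed[OF j(2)] i j by simp
  have ne: "vs ! k \<noteq> vs ! j" "vs ! k \<noteq> w" "vs ! j \<noteq> w"
    using kj dis i k j by (auto simp: nth_eq_iff_index_eq)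
  have "{w, vs ! k} \<noteq> {vs ! j, w}" using ne by (auto simp: doubleton_eq_iff)
  then have "card {{w, vs ! k}, {vs ! j, w}} = 2" by simp
  moreover have "card {{w, vs ! k}, {vs ! j, w}} \<le> degree F w" unfolding degree_def
    by (rule card_mono) (use assms(1) e1 e2 in auto)
  ultimately show ?thesis by simp
qed

lemma sub_bad:
  assumes "bad_graph V E" "\<not> lf_matching_decomposable V (E - {d})"
  shows "bad_graph V (E - {d})"
proof -
  have g: "graph V E" and sc: "subcubic V E" and pl: "planar V E" and gi: "girth_at_least V E 9"
    using assms(1) unfolding bad_graph_def by auto
  have fE: "finite E" using g by (rule graph_finE)
  have "graph V (E - {d})" using g unfolding graph_def by blast
  moreover have "subcubic V (E - {d})" unfolding subcubic_def
  proof
    fix v assume "v \<in> V"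
    have "degree (E - {d}) v \<le> degree E v" unfolding degree_def
      by (rule card_mono) (use fE in auto)
    then show "degree (E - {d}) v \<le> 3" using sc \<open>v \<in> V\<close> unfolding subcubic_def by fastforce
  qed
  moreover have "planar V (E - {d})"
  proof -
    obtain p :: "_ \<Rightarrow> complex" and \<gamma> :: "_ \<Rightarrow> real \<Rightarrow> complex" where P: "inj_on p V"
     "\<forall>e\<in>E. arc (\<gamma> e) \<and> {pathstart (\<gamma> e), pathfinish (\<gamma> e)} = p ` e \<and>
              path_image (\<gamma> e) \<inter> p ` V = p ` e"
     "\<forall>e\<in>E. \<forall>e'\<in>E. e \<noteq> e' \<longrightarrow> path_image (\<gamma> e) \<inter> path_image (\<gamma> e') \<subseteq> p ` (e \<inter> e')"
      using pl unfolding planar_def by blast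
    have "\<forall>e\<in>E - {d}. arc (\<gamma> e) \<and> {pathstart (\<gamma> e), pathfinish (\<gamma> e)} = p ` e \<and>
              path_image (\<gamma> e) \<inter> p ` V = p ` e" using P(2) by blast
    moreover have "\<forall>e\<in>E - {d}. \<forall>e'\<in>E - {d}. e \<noteq> e' \<longrightarrow> path_image (\<gamma> e) \<inter> path_image (\<gamma> e') \<subseteq> p ` (e \<inter> e')"
      using P(3) by blast
    ultimately show ?thesis unfolding planar_def
      apply (rule_tac x=p in exI)
      apply (rule_tac x=\<gamma> in exI)
      using P(1) by blast
  qed
  moreover have "girth_at_least V (E - {d}) 9" using gi cycle_mono[of "E - {d}" E V]
    unfolding girth_at_least_def by blast
  ultimately show ?thesis using assms(2) unfolding bad_graph_def by blast
qed

theorem lemma19: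
  fixes V :: "'a set" and E :: "'a set set"
  assumes bad: "bad_graph V E"
    and minimal: "\<And>(V' :: nat set) E'. bad_graph V' E' \<Longrightarrow> card V + card E \<le> card V' + card E'"
  shows "\<not> (\<exists>u v. {u, v} \<in> E \<and> degree E u = 2 \<and> degree E v = 2)"
proof
  assume "\<exists>u v. {u, v} \<in> E \<and> degree E u = 2 \<and> degree E v = 2"
  then obtain u v where uv: "{u, v} \<in> E" "degree E u = 2" "degree E v = 2" by blast
  have g: "graph V E" using bad by (simp add: bad_graph_def)
  have fE: "finite E" using g by (rule graph_finE)
  have PE: "E \<subseteq> Pow V" using g by (rule graph_Pow)
  define E' where "E' = E - {{u, v}}"
  have dec: "lf_matching_decomposable V E'"
  proof (rule ccontr)
    assume nd: "\<not> lf_matching_decomposable V E'"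
    have b': "bad_graph V E'" using sub_bad[OF bad, of "{u, v}"] nd unfolding E'_def by blast
    have "finite V" using g by (simp add: graph_def)
    then have "\<exists>(f :: 'a \<Rightarrow> nat) n. f ` V = {i. i < n} \<and> inj_on f V"
      by (rule finite_imp_inj_to_nat_seg)
    then obtain f :: "'a \<Rightarrow> nat" and n where f: "f ` V = {i. i < n}" "inj_on f V"
      by (elim exE conjE)
    have bn: "bad_graph (f ` V) ((`) f ` E')" by (rule bad_transfer[OF b' f(2)])
    have "card V + card E \<le> card (f ` V) + card ((`) f ` E')" by (rule minimal[OF bn])
    moreover have "card (f ` V) = card V" using f(2) by (simp add: card_image)
    moreover have "inj_on ((`) f) E'"
      by (rule inj_on_subset[OF inj_on_image_Pow[OF f(2)]]) (use PE in \<open>auto simp: E'_def\<close>)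
    then have "card ((`) f ` E') = card E'" by (simp add: card_image)
    moreover have "card E' < card E" unfolding E'_def by (rule card_Diff1_less[OF fE uv(1)])
    ultimately show False by linarith
  qed
  then obtain F M where FM: "F \<union> M = E'" "F \<inter> M = {}" "linear_forest V F" "matching M"
    unfolding lf_matching_decomposable_def by auto
  have nuv: "{u, v} \<notin> F" "{u, v} \<notin> M" using FM(1) unfolding E'_def by auto
  have FE: "F \<subseteq> E" "M \<subseteq> E" using FM(1) unfolding E'_def by auto
  have "lf_matching_decomposable V E"
  proof (cases "\<exists>w\<in>{u, v}. \<exists>e\<in>M. w \<in> e")
    case True
    then obtain w e where we: "w \<in> {u, v}" "e \<in> M" "w \<in> e" by blast
    define F2 where "F2 = insert {u, v} F"
    have F2E: "F2 \<subseteq> E" using FE uv(1) unfolding F2_def by auto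
    have finF2: "finite F2" using F2E fE by (rule finite_subset)
    have dw: "degree E w = 2" using we(1) uv by auto
    have eF2: "e \<notin> F2" using we(2) FM(2) nuv(2) unfolding F2_def by auto
    have "{x \<in> F2. w \<in> x} \<subseteq> {x \<in> E. w \<in> x} - {e}" using F2E eF2 by auto
    then have "degree F2 w \<le> card ({x \<in> E. w \<in> x} - {e})" unfolding degree_def
      by (rule card_mono[rotated]) (use fE in auto)
    also have "\<dots> = 1"
    proof -
      have "e \<in> {x \<in> E. w \<in> x}" using we FE(2) by auto
      then have "card ({x \<in> E. w \<in> x} - {e}) = card {x \<in> E. w \<in> x} - 1" by (rule card_Diff_singleton)
      then show ?thesis using dw unfolding degree_def by simp
    qed
    finally have dF2w: "degree F2 w \<le> 1" .
    have lf: "linear_forest V F2" unfolding linear_forest_def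
    proof (intro conjI allI ballI notI)
      fix vs assume cyc: "is_cycle V F2 vs"
      show False
      proof (cases "is_cycle V F vs")
        case True then show False using FM(3) unfolding linear_forest_def by blast
      next
        case False
        then obtain i where i: "i < length vs" "{vs ! i, vs ! ((i + 1) mod length vs)} \<notin> F"
          using cyc unfolding is_cycle_def by auto
        then have eq: "{vs ! i, vs ! ((i + 1) mod length vs)} = {u, v}"
          using cyc unfolding is_cycle_def F2_def by auto
        have k: "(i + 1) mod length vs < length vs" by (rule mod_less_divisor) (use i in auto)
        have m: "vs ! i \<in> set vs" "vs ! ((i + 1) mod length vs) \<in> set vs"
          using i(1) k by (auto intro: nth_mem)
        have "u \<in> {vs ! i, vs ! ((i + 1) mod length vs)}" "v \<in> {vs ! i, vs ! ((i + 1) mod length vs)}"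
          unfolding eq by auto
        then have "u \<in> set vs" "v \<in> set vs" using m by auto
        then have "w \<in> set vs" using we(1) by auto
        from cycle_deg[OF finF2 cyc this] dF2w show False by simp
      qed
    next
      fix x assume x: "x \<in> V"
      show "degree F2 x \<le> 2"
      proof (cases "x \<in> {u, v}")
        case True
        have "degree F2 x \<le> degree E x" unfolding degree_def
          by (rule card_mono) (use fE F2E in auto)
        then show ?thesis using True uv by auto
      next
        case False
        then have "{y \<in> F2. x \<in> y} = {y \<in> F. x \<in> y}" unfolding F2_def by auto
        then show ?thesis using FM(3) x unfolding linear_forest_def degree_def by simp
      qed
    qed
    have "F2 \<union> M = E" using FM(1) uv(1) unfolding F2_def E'_def by auto
    moreover have "F2 \<inter> M = {}" using FM(2) nuv(2) unfolding F2_def by auto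
    ultimately have "F2 \<union> M = E \<and> F2 \<inter> M = {} \<and> linear_forest V F2 \<and> matching M"
      using lf FM(4) by simp
    then show ?thesis unfolding lf_matching_decomposable_def by (intro exI)
  next
    case False
    define M2 where "M2 = insert {u, v} M"
    have "matching M2" unfolding matching_def
    proof (intro ballI impI)
      fix a b assume ab: "a \<in> M2" "b \<in> M2" "a \<noteq> b"
      show "a \<inter> b = {}"
      proof (cases "a = {u, v}")
        case True then have "b \<in> M" using ab unfolding M2_def by auto
        then show ?thesis using False True by auto
      next
        case a: False
        show ?thesis
        proof (cases "b = {u, v}")
          case True then show ?thesis using False ab a unfolding M2_def by auto
        next
          case b: False
          then show ?thesis using ab a FM(4) unfolding M2_def matching_def by auto
        qed
      qed
    qed
    moreover have "F \<union> M2 = E" using FM(1) uv(1) unfolding M2_def E'_def by auto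
    moreover have "F \<inter> M2 = {}" using FM(2) nuv(1) unfolding M2_def by auto
    ultimately have "F \<union> M2 = E \<and> F \<inter> M2 = {} \<and> linear_forest V F \<and> matching M2"
      using FM(3) by simp
    then show ?thesis unfolding lf_matching_decomposable_def by (intro exI)
  qed
  then show False using bad unfolding bad_graph_def by blast
qed

end
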